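(* For any ideal marking $\mathcal I=(I_1,\dots,I_p)$ of $\mathbb D$, there are at most $p-2$ unordered pairs $\{m,n\}$ of non-adjacent indices with $\overline{\mathcal W}_{mn}>2$ (i.e. at most $p-2$ non-degenerate truncated quadrilaterals $\Pi_{mn}$).
   Context: An ideal marking of $\mathbb D$ of cardinality $p$ is a tiling of the unit circle into closed arcs $I_1,\dots,I_p$ in cyclic order, indices in $\mathbb Z/p\mathbb Z$; $m,n$ are adjacent if $|m-n|\le 1$ in $\mathbb Z/p\mathbb Z$. For non-adjacent $m,n$, $\overline{\mathcal W}_{mn}$ is the extremal width of the family of paths in $\mathbb D$ joining $I_m$ to $I_n$. When $\overline{\mathcal W}_{mn}>2$, $\Pi_{mn}$ is obtained from $\mathbb D$, uniformized as the rectangle $(0,\overline{\mathcal W}_{mn})\times(0,1)$ with $I_m$ at the bottom and $I_n$ at the top, by removing the two end unit squares. *)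

theory Defs
  imports "HOL-Analysis.Analysis"
begin

text \<open>Indices 0..p-1 represent Z/pZ.\<close>

definition ideal_marking :: "nat \<Rightarrow> (nat \<Rightarrow> real) \<Rightarrow> bool" where
  "ideal_marking p \<theta> \<longleftrightarrow> p \<ge> 1 \<and> (\<forall>k<p. \<theta> k < \<theta> (Suc k)) \<and> \<theta> p = \<theta> 0 + 2 * pi"

definition marking_arc :: "(nat \<Rightarrow> real) \<Rightarrow> nat \<Rightarrow> complex set" where
  "marking_arc \<theta> k = (\<lambda>t. cis t) ` {\<theta> k .. \<theta> (Suc k)}"

definition adjacent_mod :: "nat \<Rightarrow> nat \<Rightarrow> nat \<Rightarrow> bool" where
  "adjacent_mod p m n \<longleftrightarrow> m = n \<or> Suc m mod p = n \<or> Suc n mod p = m"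

definition joining_paths :: "complex set \<Rightarrow> complex set \<Rightarrow> (real \<Rightarrow> complex) set" where
  "joining_paths A B = {\<gamma>. valid_path \<gamma> \<and> \<gamma> 0 \<in> A \<and> \<gamma> 1 \<in> B \<and> \<gamma> ` {0<..<1} \<subseteq> ball 0 1}"

definition rho_length :: "(complex \<Rightarrow> real) \<Rightarrow> (real \<Rightarrow> complex) \<Rightarrow> ennreal" where
  "rho_length \<rho> \<gamma> = (\<integral>\<^sup>+ t\<in>{0..1}. ennreal (\<rho> (\<gamma> t) * norm (vector_derivative \<gamma> (at t))) \<partial>lborel)"

definition admissible_metric :: "(real \<Rightarrow> complex) set \<Rightarrow> (complex \<Rightarrow> real) \<Rightarrow> bool" where
  "admissible_metric \<Gamma> \<rho> \<longleftrightarrow> \<rho> \<in> borel_measurable borel \<and> (\<forall>z. \<rho> z \<ge> 0)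
     \<and> (\<forall>\<gamma>\<in>\<Gamma>. rho_length \<rho> \<gamma> \<ge> 1)"

definition extremal_width :: "(real \<Rightarrow> complex) set \<Rightarrow> ennreal" where
  "extremal_width \<Gamma> = (INF \<rho>\<in>{\<rho>. admissible_metric \<Gamma> \<rho>}. \<integral>\<^sup>+ z. ennreal ((\<rho> z)\<^sup>2) \<partial>lborel)"

end

theory Submission
  imports Defs
begin

definition c2v :: "complex \<Rightarrow> real^2" where
  "c2v z = (\<chi> i. if i = 1 then Re z else Im z)"
definition v2c :: "real^2 \<Rightarrow> complex" where
  "v2c v = Complex (v$1) (v$2)"

lemma c2v_1[simp]: "c2v z $ 1 = Re z" by (simp add: c2v_def)
lemma c2v_2[simp]: "c2v z $ 2 = Im z" by (simp add: c2v_def)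
lemma v2c_c2v[simp]: "v2c (c2v z) = z" by (simp add: v2c_def complex_eq_iff)
lemma c2v_v2c[simp]: "c2v (v2c v) = v"
  by (simp add: v2c_def c2v_def vec_eq_iff forall_2)

lemma linear_c2v: "linear c2v"
  by (auto simp: linear_iff c2v_def vec_eq_iff)
lemma linear_v2c: "linear v2c"
  by (auto simp: linear_iff v2c_def vec_eq_iff complex_eq_iff)

lemma c2v_borel[measurable]: "c2v \<in> borel_measurable borel"
  using linear_c2v by (intro borel_measurable_continuous_onI linear_continuous_on) (simp add: linear_conv_bounded_linear)
lemma v2c_borel[measurable]: "v2c \<in> borel_measurable borel"
  using linear_v2c by (intro borel_measurable_continuous_onI linear_continuous_on) (simp add: linear_conv_bounded_linear)

lemma prod_Basis_2: "(\<Prod>b\<in>(Basis::(real^2) set). f b) = f (axis 1 1) * f (axis 2 1)"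
proof -
  have B: "(Basis::(real^2) set) = {axis 1 1, axis 2 1}"
    by (auto simp: Basis_vec_def UNIV_2)
  have ne: "axis (1::2) (1::real) \<noteq> axis 2 1"
    by (simp add: axis_eq_axis)
  show ?thesis unfolding B using ne by simp
qed

lemma lborel_c2v: "distr lborel borel c2v = (lborel :: (real^2) measure)"
proof (rule lborel_eqI[symmetric])
  fix l u :: "real^2"
  assume le: "\<And>b. b \<in> Basis \<Longrightarrow> l \<bullet> b \<le> u \<bullet> b"
  have "axis 1 1 \<in> (Basis :: (real^2) set)" "axis 2 1 \<in> (Basis :: (real^2) set)"
    by (auto simp: Basis_vec_def)
  then have "l \<bullet> axis 1 1 \<le> u \<bullet> axis 1 1" "l \<bullet> axis 2 1 \<le> u \<bullet> axis 2 1" using le by blast+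
  then have l1: "l$1 \<le> u$1" and l2: "l$2 \<le> u$2" by (simp_all add: inner_axis)
  have pre: "c2v -` box l u = box (v2c l) (v2c u)"
    by (auto simp: box_def Basis_vec_def Basis_complex_def inner_axis v2c_def forall_2 cart_eq_inner_axis[symmetric])
  have "emeasure (distr lborel borel c2v) (box l u) = emeasure lborel (box (v2c l) (v2c u))"
    by (simp add: emeasure_distr pre)
  also have "\<dots> = ennreal ((u$1 - l$1) * (u$2 - l$2))"
    using l1 l2 by (subst emeasure_lborel_box) (auto simp: Basis_complex_def v2c_def)
  also have "\<dots> = (\<Prod>b\<in>Basis. (u - l) \<bullet> b)"
    by (simp add: prod_Basis_2 inner_axis)
  finally show "emeasure (distr lborel borel c2v) (box l u) = (\<Prod>b\<in>Basis. (u - l) \<bullet> b)" .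
qed simp

lemma det_c2v: "det (matrix (\<lambda>h. c2v (w * v2c h))) = (cmod w)\<^sup>2"
  using cmod_power2[of w] by (simp add: det_2 matrix_def c2v_def v2c_def axis_def power2_eq_square)

lemma complex_cov_le:
  fixes \<Phi> \<Phi>' :: "complex \<Rightarrow> complex" and U :: "complex set" and l u :: complex
  assumes U: "open U" and inj: "inj_on \<Phi> U"
    and der: "\<And>z. z \<in> U \<Longrightarrow> (\<Phi> has_field_derivative \<Phi>' z) (at z)"
    and cont: "continuous_on U \<Phi>'"
    and sub: "\<Phi> ` U \<subseteq> box l u" and lu: "Re l \<le> Re u" "Im l \<le> Im u"
  shows "(\<integral>\<^sup>+z. indicator U z * ennreal ((cmod (\<Phi>' z))\<^sup>2) \<partial>lborel)
           \<le> ennreal ((Re u - Re l) * (Im u - Im l))"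
proof -
  define g where "g = c2v \<circ> \<Phi> \<circ> v2c"
  define S where "S = v2c -` U"
  define g' where "g' x = (\<lambda>h. c2v (\<Phi>' (v2c x) * v2c h))" for x
  have contv2c: "continuous_on UNIV v2c"
    using linear_v2c by (intro linear_continuous_on) (simp add: linear_conv_bounded_linear)
  have Sopen: "open S" unfolding S_def
    using contv2c U by (simp add: continuous_on_open_vimage)
  have Sborel: "S \<in> sets borel" using Sopen by simp
  then have Sleb: "S \<in> sets lebesgue" by (intro sets_completionI_sets) simp
  have gder: "(g has_derivative g' x) (at x within S)" if "x \<in> S" for x
  proof -
    have "v2c x \<in> U" using that S_def by auto
    then have d1: "(\<Phi> has_derivative (\<lambda>h. \<Phi>' (v2c x) * h)) (at (v2c x))"
      using der has_field_derivative_imp_has_derivative by blast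
    have bl1: "bounded_linear v2c" using linear_v2c by (simp add: linear_conv_bounded_linear)
    have bl2: "bounded_linear c2v" using linear_c2v by (simp add: linear_conv_bounded_linear)
    have "(v2c has_derivative v2c) (at x)" using bl1 by (rule bounded_linear_imp_has_derivative)
    from diff_chain_at[OF this d1]
    have "((\<Phi> \<circ> v2c) has_derivative ((\<lambda>h. \<Phi>' (v2c x) * h) \<circ> v2c)) (at x)" .
    moreover have "(c2v has_derivative c2v) (at ((\<Phi> \<circ> v2c) x))" using bl2 by (rule bounded_linear_imp_has_derivative)
    ultimately have "((c2v \<circ> (\<Phi> \<circ> v2c)) has_derivative (c2v \<circ> ((\<lambda>h. \<Phi>' (v2c x) * h) \<circ> v2c))) (at x)"
      by (rule diff_chain_at)
    then have "(g has_derivative g' x) (at x)" unfolding g_def g'_def by (simp add: o_def comp_assoc)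
    then show ?thesis by (rule has_derivative_at_withinI)
  qed
  have ginj: "inj_on g S"
    using inj unfolding g_def S_def inj_on_def
    by (metis comp_apply v2c_c2v c2v_v2c vimageE)
  have gS: "g ` S = c2v ` (\<Phi> ` U)"
  proof
    show "g ` S \<subseteq> c2v ` (\<Phi> ` U)" unfolding g_def S_def by auto
    show "c2v ` (\<Phi> ` U) \<subseteq> g ` S"
    proof
      fix y assume "y \<in> c2v ` (\<Phi> ` U)"
      then obtain z where "z \<in> U" "y = c2v (\<Phi> z)" by auto
      then show "y \<in> g ` S" unfolding g_def S_def
        by (intro image_eqI[of _ _ "c2v z"]) auto
    qed
  qed
  have bsub: "g ` S \<subseteq> box (c2v l) (c2v u)"
  proof
    fix y assume "y \<in> g ` S"
    then obtain z where z: "z \<in> U" "y = c2v (\<Phi> z)" using gS by auto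
    then have "\<Phi> z \<in> box l u" using sub by auto
    then show "y \<in> box (c2v l) (c2v u)" using z
      by (auto simp: box_def Basis_complex_def Basis_vec_def inner_axis cart_eq_inner_axis[symmetric] forall_2)
  qed
  have gdiff: "g differentiable_on S"
    using gder differentiable_on_def differentiable_def by blast
  have gSleb: "g ` S \<in> sets lebesgue"
    by (rule differentiable_image_in_sets_lebesgue[OF Sleb _ gdiff]) simp
  have gSlm: "g ` S \<in> lmeasurable"
    by (rule bounded_set_imp_lmeasurable[OF _ gSleb]) (meson bounded_box bounded_subset bsub)
  have hi: "((\<lambda>x. \<bar>det (matrix (g' x))\<bar>) has_integral measure lebesgue (g ` S)) S"
    using has_measure_differentiable_image[OF Sleb gder ginj] gSlm by blast
  have detg: "\<bar>det (matrix (g' x))\<bar> = (cmod (\<Phi>' (v2c x)))\<^sup>2" for x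
    unfolding g'_def det_c2v by simp
  have hi2: "((\<lambda>x. (cmod (\<Phi>' (v2c x)))\<^sup>2) has_integral measure lebesgue (g ` S)) S"
    using hi by (simp add: detg)
  have nn: "(\<integral>\<^sup>+x. ennreal ((cmod (\<Phi>' (v2c x)))\<^sup>2) * indicator S x \<partial>lborel) = ennreal (measure lebesgue (g ` S))"
    by (rule nn_integral_has_integral_lebesgue'[OF _ hi2]) simp
  have mle: "measure lebesgue (g ` S) \<le> measure lebesgue (box (c2v l) (c2v u))"
    by (rule measure_mono_fmeasurable[OF bsub]) (auto simp: gSleb)
  have mbox: "measure lebesgue (box (c2v l) (c2v u)) = (Re u - Re l) * (Im u - Im l)"
  proof -
    have "\<forall>b\<in>(Basis :: (real^2) set). c2v l \<bullet> b \<le> c2v u \<bullet> b"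
      using lu by (auto simp: Basis_vec_def inner_axis forall_2)
    then show ?thesis
      by (simp add: measure_lborel_box_eq prod_Basis_2 inner_axis)
  qed
  have meas: "(\<lambda>x. ennreal ((cmod (\<Phi>' (v2c x)))\<^sup>2) * indicator S x) \<in> borel_measurable borel"
  proof -
    have "continuous_on S (\<lambda>x. (cmod (\<Phi>' (v2c x)))\<^sup>2)"
      by (intro continuous_intros continuous_on_compose2[OF cont] continuous_on_subset[OF contv2c])
         (auto simp: S_def)
    from borel_measurable_continuous_on_indicator[OF Sborel this]
    have "(\<lambda>x. indicator S x * (cmod (\<Phi>' (v2c x)))\<^sup>2) \<in> borel_measurable borel" by simp
    then have "(\<lambda>x. ennreal (indicator S x * (cmod (\<Phi>' (v2c x)))\<^sup>2)) \<in> borel_measurable borel" by simp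
    then show ?thesis
      by (rule measurable_cong[THEN iffD1, rotated]) (auto simp: indicator_def)
  qed
  have "(\<integral>\<^sup>+z. indicator U z * ennreal ((cmod (\<Phi>' z))\<^sup>2) \<partial>lborel)
      = (\<integral>\<^sup>+z. ennreal ((cmod (\<Phi>' (v2c (c2v z))))\<^sup>2) * indicator S (c2v z) \<partial>lborel)"
    by (intro nn_integral_cong) (auto simp: S_def indicator_def)
  also have "\<dots> = (\<integral>\<^sup>+x. ennreal ((cmod (\<Phi>' (v2c x)))\<^sup>2) * indicator S x \<partial>(distr lborel borel c2v))"
    by (subst nn_integral_distr) (auto simp: meas)
  also have "\<dots> = ennreal (measure lebesgue (g ` S))"
    unfolding lborel_c2v nn ..
  also have "\<dots> \<le> ennreal ((Re u - Re l) * (Im u - Im l))"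
    using mle mbox by (simp add: ennreal_leI)
  finally show ?thesis .
qed

lemma mobius_Ln_deriv:
  fixes n1 n0 d1 d0 z :: complex
  assumes D: "d1*z+d0 \<noteq> 0" and N: "n1*z+n0 \<noteq> 0" and H: "0 < Im ((n1*z+n0)/(d1*z+d0))"
  shows "((\<lambda>z. Ln ((n1*z+n0)/(d1*z+d0))) has_field_derivative
           (n1*d0 - n0*d1)/((n1*z+n0)*(d1*z+d0))) (at z)"
proof -
  have w: "(n1*z+n0)/(d1*z+d0) \<notin> \<real>\<^sub>\<le>\<^sub>0"
    using H by (auto simp: nonpos_Reals_def complex_is_Real_iff)
  have d1: "((\<lambda>z. (n1*z+n0)/(d1*z+d0)) has_field_derivative
       ((n1*(d1*z+d0) - (n1*z+n0)*d1)/((d1*z+d0)*(d1*z+d0)))) (at z)"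
    using D by (auto intro!: derivative_eq_intros simp: power2_eq_square)
  have "((\<lambda>z. Ln ((n1*z+n0)/(d1*z+d0))) has_field_derivative
       (inverse ((n1*z+n0)/(d1*z+d0)) * ((n1*(d1*z+d0) - (n1*z+n0)*d1)/((d1*z+d0)*(d1*z+d0))))) (at z)"
    using DERIV_chain2[OF has_field_derivative_Ln[OF w] d1] by simp
  moreover have "inverse ((n1*z+n0)/(d1*z+d0)) * ((n1*(d1*z+d0) - (n1*z+n0)*d1)/((d1*z+d0)*(d1*z+d0)))
     = (n1*d0 - n0*d1)/((n1*z+n0)*(d1*z+d0))"
  proof -
    have e: "n1*(d1*z+d0) - (n1*z+n0)*d1 = n1*d0 - n0*d1" by (simp add: algebra_simps)
    have g: "inverse (a/b) * (c/(b*b)) = c/(a*b)" if "a \<noteq> 0" "b \<noteq> 0" for a b c :: complex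
      using that by (simp add: field_simps)
    show ?thesis unfolding e using g[OF N D] by simp
  qed
  ultimately show ?thesis by simp
qed

lemma path_part:
  fixes n1 n0 d1 d0 :: complex and r r' :: real and \<gamma> :: "real \<Rightarrow> complex"
  defines "N \<equiv> (\<lambda>z. n1*z+n0)" and "Dn \<equiv> (\<lambda>z. d1*z+d0)"
  defines "U \<equiv> {z. norm z < 1 \<and> r * norm (Dn z) < norm (N z) \<and> norm (N z) < r' * norm (Dn z)}"
  defines "\<rho> \<equiv> (\<lambda>z. indicator U z * (cmod (n1*d0 - n0*d1) / (cmod (N z) * cmod (Dn z) * ln (r'/r))))"
  assumes det: "n1*d0 - n0*d1 \<noteq> 0"
    and H: "\<And>z. norm z < 1 \<Longrightarrow> Dn z \<noteq> 0 \<and> 0 < Im (N z / Dn z)"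
    and r: "0 < r" "r < r'"
    and vp: "valid_path \<gamma>"
    and g0: "norm (N (\<gamma> 0)) \<le> r * norm (Dn (\<gamma> 0))"
    and g1: "r' * norm (Dn (\<gamma> 1)) \<le> norm (N (\<gamma> 1))"
    and gin: "\<gamma> ` {0<..<1} \<subseteq> ball 0 1"
  shows "1 \<le> rho_length \<rho> \<gamma>"
proof -
  define L where "L = ln (r'/r)"
  have L: "0 < L" using r by (simp add: L_def)
  define K where "K = cmod (n1*d0 - n0*d1)"
  have nz: "\<not> (N z = 0 \<and> Dn z = 0)" for z
  proof
    assume "N z = 0 \<and> Dn z = 0"
    then have "n1*z+n0 = 0" "d1*z+d0 = 0" by (auto simp: N_def Dn_def)
    then have "n0 = - n1*z" "d0 = - d1*z" by (auto simp: algebra_simps eq_neg_iff_add_eq_0)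
    then show False using det by (simp add: algebra_simps)
  qed
  have both: "False" if "norm (N z) \<le> r * norm (Dn z)" "r' * norm (Dn z) \<le> norm (N z)" for z
  proof -
    have "(r' - r) * norm (Dn z) \<le> 0" using that by (simp add: algebra_simps)
    then have "norm (Dn z) \<le> 0" using r by (simp add: mult_le_0_iff)
    then have "Dn z = 0" by simp
    then have "N z = 0" using that(1) by simp
    then show False using nz \<open>Dn z = 0\<close> by blast
  qed
  have pth: "continuous_on {0..1} \<gamma>" using vp valid_path_imp_path path_def by blast
  have contN: "continuous_on A (\<lambda>t. norm (N (\<gamma> t)))" if "A \<subseteq> {0..1}" for A
    unfolding N_def by (intro continuous_intros continuous_on_subset[OF pth that])
  have contD: "continuous_on A (\<lambda>t. norm (Dn (\<gamma> t)))" if "A \<subseteq> {0..1}" for A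
    unfolding Dn_def by (intro continuous_intros continuous_on_subset[OF pth that])
  define K1 where "K1 = {t \<in> {0..1}. r' * norm (Dn (\<gamma> t)) \<le> norm (N (\<gamma> t))}"
  have K1c: "closed K1" unfolding K1_def
    by (intro continuous_on_closed_Collect_le continuous_intros contD contN) auto
  have 1: "1 \<in> K1" using g1 K1_def by auto
  define t1 where "t1 = Inf K1"
  have t1K: "t1 \<in> K1" unfolding t1_def
    using closed_contains_Inf[OF _ _ K1c] 1 by (force simp: K1_def bdd_below_def)
  have t1r: "0 \<le> t1" "t1 \<le> 1" using t1K K1_def by auto
  have t1low: "t1 \<le> t" if "t \<in> K1" for t
    unfolding t1_def by (rule cInf_lower[OF that]) (auto simp: K1_def bdd_below_def)
  define K0 where "K0 = {t \<in> {0..t1}. norm (N (\<gamma> t)) \<le> r * norm (Dn (\<gamma> t))}"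
  have K0c: "closed K0" unfolding K0_def
    by (intro continuous_on_closed_Collect_le continuous_intros contD contN) (use t1r in auto)
  have 0: "0 \<in> K0" using g0 K0_def t1r by auto
  define t0 where "t0 = Sup K0"
  have t0K: "t0 \<in> K0" unfolding t0_def
    using closed_contains_Sup[OF _ _ K0c] 0 by (force simp: K0_def bdd_above_def)
  have t0up: "t \<le> t0" if "t \<in> K0" for t
    unfolding t0_def by (rule cSup_upper[OF that]) (auto simp: K0_def bdd_above_def)
  have t0r: "0 \<le> t0" "t0 \<le> t1" using t0K K0_def by auto
  have "t0 \<noteq> t1" using t0K t1K both unfolding K0_def K1_def by blast
  then have t01: "t0 < t1" using t0r by simp
  have inU: "\<gamma> t \<in> U" if "t \<in> {t0<..<t1}" for t
  proof -
    have t: "0 < t" "t < 1" using that t0r t1r by auto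
    have "t \<notin> K1" using t1low that by force
    then have a: "norm (N (\<gamma> t)) < r' * norm (Dn (\<gamma> t))" using t K1_def by auto
    have "t \<notin> K0" using t0up that by force
    then have b: "r * norm (Dn (\<gamma> t)) < norm (N (\<gamma> t))" using t that K0_def by auto
    have "t \<in> {0<..<1}" using t by auto
    then have "\<gamma> t \<in> ball 0 1" using gin by blast
    then have "norm (\<gamma> t) < 1" by simp
    then show ?thesis using a b U_def by auto
  qed
  have e0: "norm (N (\<gamma> t0)) = r * norm (Dn (\<gamma> t0))"
  proof -
    define C where "C = {t \<in> {t0..t1}. r * norm (Dn (\<gamma> t)) \<le> norm (N (\<gamma> t))}"
    have Cc: "closed C" unfolding C_def
      by (intro continuous_on_closed_Collect_le continuous_intros contD contN) (use t0r t1r in auto)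
    have "{t0<..<t1} \<subseteq> C"
    proof
      fix t assume tt: "t \<in> {t0<..<t1}"
      then have "\<gamma> t \<in> U" by (rule inU)
      then show "t \<in> C" using tt unfolding U_def C_def by (auto simp: less_imp_le)
    qed
    then have "closure {t0<..<t1} \<subseteq> C" using Cc by (rule closure_minimal)
    then have "t0 \<in> C" using t01 by auto
    then show ?thesis using t0K C_def K0_def by auto
  qed
  have e1: "norm (N (\<gamma> t1)) = r' * norm (Dn (\<gamma> t1))"
  proof -
    define C where "C = {t \<in> {t0..t1}. norm (N (\<gamma> t)) \<le> r' * norm (Dn (\<gamma> t))}"
    have Cc: "closed C" unfolding C_def
      by (intro continuous_on_closed_Collect_le continuous_intros contD contN) (use t0r t1r in auto)
    have "{t0<..<t1} \<subseteq> C"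
    proof
      fix t assume tt: "t \<in> {t0<..<t1}"
      then have "\<gamma> t \<in> U" by (rule inU)
      then show "t \<in> C" using tt unfolding U_def C_def by (auto simp: less_imp_le)
    qed
    then have "closure {t0<..<t1} \<subseteq> C" using Cc by (rule closure_minimal)
    then have "t1 \<in> C" using t01 by auto
    then show ?thesis using t1K C_def K1_def by auto
  qed
  have nz0: "Dn (\<gamma> t0) \<noteq> 0" "N (\<gamma> t0) \<noteq> 0"
    using e0 nz r by (auto)
  have nz1: "Dn (\<gamma> t1) \<noteq> 0" "N (\<gamma> t1) \<noteq> 0"
    using e1 nz r by (auto)
  have nzU: "Dn z \<noteq> 0" "N z \<noteq> 0" if "z \<in> U" for z
  proof -
    have "norm z < 1" using that U_def by auto
    then have "Dn z \<noteq> 0 \<and> 0 < Im (N z / Dn z)" by (rule H)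
    then show "Dn z \<noteq> 0" "N z \<noteq> 0" by auto
  qed
  have nzI: "Dn (\<gamma> t) \<noteq> 0 \<and> N (\<gamma> t) \<noteq> 0" if "t \<in> {t0..t1}" for t
  proof (cases "t = t0 \<or> t = t1")
    case True then show ?thesis using nz0 nz1 by auto
  next
    case False then have "t \<in> {t0<..<t1}" using that by auto
    then show ?thesis using inU nzU by auto
  qed
  define u where "u t = ln (norm (N (\<gamma> t))) - ln (norm (Dn (\<gamma> t)))" for t
  have ucont: "continuous_on {t0..t1} u"
    unfolding u_def using nzI t0r t1r
    by (intro continuous_intros contD contN) auto
  have udiff: "u t1 - u t0 = L"
  proof -
    have "u t1 = ln r'" using e1 nz1 r unfolding u_def by (simp add: ln_mult)
    moreover have "u t0 = ln r" using e0 nz0 r unfolding u_def by (simp add: ln_mult)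
    ultimately show ?thesis using r by (simp add: L_def ln_div)
  qed
  obtain S D where S: "finite S" and Dder: "\<And>x. x \<in> {0..1} - S \<Longrightarrow> (\<gamma> has_vector_derivative D x) (at x)"
    and Dcont: "continuous_on ({0..1} - S) D"
    using vp unfolding valid_path_def piecewise_C1_differentiable_on_def C1_differentiable_on_def by blast
  define V where "V = {t0<..<t1} - S"
  have Vsub: "V \<subseteq> {0..1} - S" using V_def t0r t1r by auto
  define \<Phi>' where "\<Phi>' z = (n1*d0 - n0*d1)/(N z * Dn z)" for z
  define u' where "u' t = (if t \<in> V then Re (\<Phi>' (\<gamma> t) * D t) else 0)" for t
  have uder: "(u has_vector_derivative u' t) (at t)" if t: "t \<in> {t0<..<t1} - S" for t
  proof -
    have tV: "t \<in> V" using t V_def by auto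
    have gU: "\<gamma> t \<in> U" using inU t by auto
    have H': "Dn (\<gamma> t) \<noteq> 0 \<and> 0 < Im (N (\<gamma> t) / Dn (\<gamma> t))" using gU U_def H by auto
    have dF: "((\<lambda>z. Ln (N z / Dn z)) has_field_derivative \<Phi>' (\<gamma> t)) (at (\<gamma> t))"
      unfolding \<Phi>'_def N_def Dn_def
      by (rule mobius_Ln_deriv) (use H' nzU[OF gU] in \<open>auto simp: N_def Dn_def\<close>)
    have "(((\<lambda>z. Ln (N z / Dn z)) \<circ> \<gamma>) has_vector_derivative (D t * \<Phi>' (\<gamma> t))) (at t)"
      by (rule field_vector_diff_chain_at[OF Dder dF]) (use tV Vsub in auto)
    then have "((\<lambda>s. Ln (N (\<gamma> s) / Dn (\<gamma> s))) has_vector_derivative (D t * \<Phi>' (\<gamma> t))) (at t)"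
      by (simp add: o_def)
    then have "((\<lambda>s. Re (Ln (N (\<gamma> s) / Dn (\<gamma> s)))) has_field_derivative Re (D t * \<Phi>' (\<gamma> t))) (at t)"
      by (rule has_field_derivative_Re)
    then have d2: "((\<lambda>s. Re (Ln (N (\<gamma> s) / Dn (\<gamma> s)))) has_vector_derivative u' t) (at t)"
      using tV by (simp add: has_real_derivative_iff_has_vector_derivative u'_def mult.commute)
    show ?thesis
    proof (rule has_vector_derivative_transform_within_open[OF d2, of "{t0<..<t1}"])
      show "open {t0<..<t1}" by simp
      show "t \<in> {t0<..<t1}" using t by auto
      fix y assume y: "y \<in> {t0<..<t1}"
      then have "N (\<gamma> y) \<noteq> 0" "Dn (\<gamma> y) \<noteq> 0" using nzI by auto
      then show "Re (Ln (N (\<gamma> y) / Dn (\<gamma> y))) = u y"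
        unfolding u_def by (simp add: norm_divide ln_div)
    qed
  qed
  have ftc: "(u' has_integral (u t1 - u t0)) {t0..t1}"
    by (rule fundamental_theorem_of_calculus_interior_strong[OF S _ uder ucont]) (use t01 in auto)
  define G where "G t = indicator V t * (\<rho> (\<gamma> t) * cmod (D t))" for t
  have Gnn: "0 \<le> G t" for t
    unfolding G_def \<rho>_def using less_imp_le[OF L[unfolded L_def]]
    by (auto simp: indicator_def intro!: mult_nonneg_nonneg divide_nonneg_nonneg)
  have rhoV: "\<rho> (\<gamma> t) = K / (cmod (N (\<gamma> t)) * cmod (Dn (\<gamma> t)) * L)" if "t \<in> V" for t
    using inU[of t] that V_def unfolding \<rho>_def K_def L_def by auto
  have ule: "u' t \<le> L * G t" for t
  proof (cases "t \<in> V")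
    case False then show ?thesis using Gnn[of t] L by (simp add: u'_def G_def)
  next
    case True
    have gU: "\<gamma> t \<in> U" using inU True V_def by auto
    have "u' t = Re (\<Phi>' (\<gamma> t) * D t)" using True u'_def by simp
    also have "\<dots> \<le> cmod (\<Phi>' (\<gamma> t) * D t)" by (rule complex_Re_le_cmod)
    also have "\<dots> = K / (cmod (N (\<gamma> t)) * cmod (Dn (\<gamma> t))) * cmod (D t)"
      unfolding \<Phi>'_def K_def by (simp add: norm_mult norm_divide)
    also have "\<dots> = L * G t"
      using True rhoV[OF True] L nzU[OF gU] unfolding G_def by (simp add: field_simps)
    finally show ?thesis .
  qed
  have Vopen: "open V" unfolding V_def using S by (intro open_Diff finite_imp_closed) auto
  have Gmeas: "G \<in> borel_measurable borel"
  proof -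
    have "continuous_on V (\<lambda>t. K / (cmod (N (\<gamma> t)) * cmod (Dn (\<gamma> t)) * L) * cmod (D t))"
    proof -
      have c1: "continuous_on V (\<lambda>t. cmod (N (\<gamma> t)))" using contN Vsub by auto
      have c2: "continuous_on V (\<lambda>t. cmod (Dn (\<gamma> t)))" using contD Vsub by auto
      have c3: "continuous_on V (\<lambda>t. cmod (D t))"
        using Dcont Vsub continuous_on_subset continuous_on_norm by blast
      have nzV: "cmod (N (\<gamma> t)) * cmod (Dn (\<gamma> t)) * L \<noteq> 0" if "t \<in> V" for t
      proof -
        have "\<gamma> t \<in> U" using inU that V_def by auto
        then show ?thesis using nzU L by auto
      qed
      show ?thesis
        by (intro continuous_on_mult continuous_on_divide continuous_on_const c1 c2 c3) (use nzV in blast)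
    qed
    then have "continuous_on V (\<lambda>t. \<rho> (\<gamma> t) * cmod (D t))"
      by (rule continuous_on_cong[THEN iffD1, rotated 2]) (auto simp: rhoV)
    from borel_measurable_continuous_on_indicator[OF _ this] Vopen
    show ?thesis unfolding G_def by simp
  qed
  have rl: "(\<integral>\<^sup>+t. ennreal (G t) \<partial>lborel) \<le> rho_length \<rho> \<gamma>"
    unfolding rho_length_def
  proof (intro nn_integral_mono)
    fix t
    show "ennreal (G t) \<le> ennreal (\<rho> (\<gamma> t) * cmod (vector_derivative \<gamma> (at t))) * indicator {0..1} t"
    proof (cases "t \<in> V")
      case False then show ?thesis by (simp add: G_def)
    next
      case True
      then have "t \<in> {0..1} - S" using Vsub by auto
      then have "vector_derivative \<gamma> (at t) = D t" using Dder vector_derivative_at by blast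
      then show ?thesis using True Vsub G_def by (auto simp: indicator_def)
    qed
  qed
  show ?thesis
  proof (cases "(\<integral>\<^sup>+t. ennreal (G t) \<partial>lborel)" rule: ennreal_cases)
    case top then show ?thesis using rl by (simp add: top.extremum_unique)
  next
    case (real I)
    have GI: "(G has_integral I) UNIV"
      by (rule nn_integral_has_integral[OF Gmeas Gnn real(2) real(1)])
    have "(G has_integral I) {t0..t1}"
    proof -
      have "(\<lambda>x. if x \<in> {t0..t1} then G x else 0) = G"
        by (auto simp: G_def V_def indicator_def fun_eq_iff)
      then show ?thesis using GI has_integral_restrict_UNIV[of "{t0..t1}" G I] by simp
    qed
    then have "((\<lambda>t. L * G t) has_integral (L * I)) {t0..t1}" by (rule has_integral_mult_right)
    then have "u t1 - u t0 \<le> L * I" using has_integral_le[OF ftc _ ule] by blast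
    then have "1 \<le> I" using udiff L by simp
    then have "ennreal 1 \<le> ennreal I" by (rule ennreal_leI)
    then have "1 \<le> (\<integral>\<^sup>+t. ennreal (G t) \<partial>lborel)" using real(2) by simp
    then show ?thesis using rl by (rule order_trans)
  qed
qed

lemma core_bound:
  fixes n1 n0 d1 d0 :: complex and r r' :: real and X Y :: "complex set"
  defines "N \<equiv> (\<lambda>z. n1*z+n0)" and "Dn \<equiv> (\<lambda>z. d1*z+d0)"
  assumes det: "n1*d0 - n0*d1 \<noteq> 0"
    and H: "\<And>z. norm z < 1 \<Longrightarrow> Dn z \<noteq> 0 \<and> 0 < Im (N z / Dn z)"
    and r: "0 < r" "r < r'"
    and X: "\<And>z. z \<in> X \<Longrightarrow> norm (N z) \<le> r * norm (Dn z)"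
    and Y: "\<And>z. z \<in> Y \<Longrightarrow> r' * norm (Dn z) \<le> norm (N z)"
  shows "extremal_width (joining_paths X Y) \<le> ennreal (pi / ln (r'/r))"
proof -
  define L where "L = ln (r'/r)"
  have L: "0 < L" using r by (simp add: L_def)
  define K where "K = cmod (n1*d0 - n0*d1)"
  define U where "U = {z. norm z < 1 \<and> r * norm (Dn z) < norm (N z) \<and> norm (N z) < r' * norm (Dn z)}"
  define \<rho> where "\<rho> = (\<lambda>z. indicator U z * (cmod (n1*d0 - n0*d1) / (cmod (N z) * cmod (Dn z) * ln (r'/r))))"
  have Uopen: "open U" unfolding U_def N_def Dn_def
    by (intro open_Collect_conj open_Collect_less continuous_intros)
  have nzU: "Dn z \<noteq> 0" "N z \<noteq> 0" "0 < Im (N z / Dn z)" if "z \<in> U" for z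
  proof -
    have "norm z < 1" using that U_def by auto
    then have "Dn z \<noteq> 0 \<and> 0 < Im (N z / Dn z)" by (rule H)
    then show "Dn z \<noteq> 0" "N z \<noteq> 0" "0 < Im (N z / Dn z)" by auto
  qed
  have rho_nn: "0 \<le> \<rho> z" for z
    unfolding \<rho>_def using less_imp_le[OF L[unfolded L_def]]
    by (auto simp: indicator_def intro!: mult_nonneg_nonneg divide_nonneg_nonneg)
  have rho_meas: "\<rho> \<in> borel_measurable borel"
  proof -
    have "continuous_on U (\<lambda>z. cmod (n1*d0 - n0*d1) / (cmod (N z) * cmod (Dn z) * ln (r'/r)))"
      unfolding N_def Dn_def
      by (intro continuous_intros) (use nzU L in \<open>auto simp: N_def Dn_def L_def\<close>)
    from borel_measurable_continuous_on_indicator[OF _ this] Uopen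
    show ?thesis unfolding \<rho>_def by simp
  qed
  have adm: "admissible_metric (joining_paths X Y) \<rho>"
    unfolding admissible_metric_def
  proof (intro conjI ballI allI rho_meas rho_nn)
    fix \<gamma> assume "\<gamma> \<in> joining_paths X Y"
    then have g: "valid_path \<gamma>" "\<gamma> 0 \<in> X" "\<gamma> 1 \<in> Y" "\<gamma> ` {0<..<1} \<subseteq> ball 0 1"
      unfolding joining_paths_def by auto
    show "1 \<le> rho_length \<rho> \<gamma>"
      unfolding \<rho>_def U_def N_def Dn_def
      by (rule path_part[OF det _ r g(1) _ _ g(4)]) (use H X[OF g(2)] Y[OF g(3)] in \<open>auto simp: N_def Dn_def\<close>)
  qed
  define \<Phi> where "\<Phi> z = Ln (N z / Dn z)" for z
  define \<Phi>' where "\<Phi>' z = (n1*d0 - n0*d1)/(N z * Dn z)" for z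
  have der: "(\<Phi> has_field_derivative \<Phi>' z) (at z)" if "z \<in> U" for z
    unfolding \<Phi>_def \<Phi>'_def N_def Dn_def
    by (rule mobius_Ln_deriv) (use nzU[OF that] in \<open>auto simp: N_def Dn_def\<close>)
  have contP: "continuous_on U \<Phi>'"
    unfolding \<Phi>'_def N_def Dn_def
    by (intro continuous_intros) (use nzU in \<open>auto simp: N_def Dn_def\<close>)
  have inj: "inj_on \<Phi> U"
  proof (rule inj_onI)
    fix z w assume zw: "z \<in> U" "w \<in> U" "\<Phi> z = \<Phi> w"
    have "exp (Ln (N z / Dn z)) = exp (Ln (N w / Dn w))" using zw(3) \<Phi>_def by simp
    then have "N z / Dn z = N w / Dn w" using nzU[OF zw(1)] nzU[OF zw(2)] by simp
    then have "N z * Dn w = N w * Dn z" using nzU[OF zw(1)] nzU[OF zw(2)] by (simp add: field_simps)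
    then have "(n1*d0 - n0*d1) * (z - w) = 0" unfolding N_def Dn_def by (simp add: algebra_simps)
    then show "z = w" using det by simp
  qed
  have sub: "\<Phi> ` U \<subseteq> box (Complex (ln r) 0) (Complex (ln r') pi)"
  proof
    fix y assume "y \<in> \<Phi> ` U"
    then obtain z where z: "z \<in> U" "y = \<Phi> z" by auto
    have nz: "Dn z \<noteq> 0" "N z \<noteq> 0" and im: "0 < Im (N z / Dn z)" using nzU[OF z(1)] by auto
    have q: "r < norm (N z) / norm (Dn z)" "norm (N z) / norm (Dn z) < r'"
      using z(1) nz unfolding U_def by (auto simp: field_simps)
    have "Re y = ln (norm (N z) / norm (Dn z))" using z nz by (simp add: \<Phi>_def norm_divide)
    then have re: "ln r < Re y" "Re y < ln r'" using q r by auto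
    have "0 < Im y \<and> Im y < pi" using Im_Ln_pos_lt_imp[OF im] z by (simp add: \<Phi>_def)
    then show "y \<in> box (Complex (ln r) 0) (Complex (ln r') pi)"
      using re by (auto simp: box_def Basis_complex_def)
  qed
  have cov: "(\<integral>\<^sup>+z. indicator U z * ennreal ((cmod (\<Phi>' z))\<^sup>2) \<partial>lborel)
           \<le> ennreal ((Re (Complex (ln r') pi) - Re (Complex (ln r) 0)) * (Im (Complex (ln r') pi) - Im (Complex (ln r) 0)))"
    by (rule complex_cov_le[OF Uopen inj der contP sub]) (use r in auto)
  have cov': "(\<integral>\<^sup>+z. indicator U z * ennreal ((cmod (\<Phi>' z))\<^sup>2) \<partial>lborel) \<le> ennreal (L * pi)"
    using cov r by (simp add: L_def ln_div)
  have "(\<integral>\<^sup>+z. ennreal ((\<rho> z)\<^sup>2) \<partial>lborel)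
      = (\<integral>\<^sup>+z. ennreal (1 / L\<^sup>2) * (indicator U z * ennreal ((cmod (\<Phi>' z))\<^sup>2)) \<partial>lborel)"
  proof (intro nn_integral_cong)
    fix z
    show "ennreal ((\<rho> z)\<^sup>2) = ennreal (1 / L\<^sup>2) * (indicator U z * ennreal ((cmod (\<Phi>' z))\<^sup>2))"
    proof (cases "z \<in> U")
      case True
      have "(\<rho> z)\<^sup>2 = 1 / L\<^sup>2 * (cmod (\<Phi>' z))\<^sup>2"
        using True unfolding \<rho>_def \<Phi>'_def L_def
        by (simp add: norm_divide norm_mult power_divide power_mult_distrib)
      then show ?thesis using True L by (simp add: ennreal_mult'[symmetric])
    next
      case False then show ?thesis by (simp add: \<rho>_def)
    qed
  qed
  also have "\<dots> = ennreal (1 / L\<^sup>2) * (\<integral>\<^sup>+z. indicator U z * ennreal ((cmod (\<Phi>' z))\<^sup>2) \<partial>lborel)"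
  proof (rule nn_integral_cmult)
    have "continuous_on U (\<lambda>z. (cmod (\<Phi>' z))\<^sup>2)" by (intro continuous_intros contP)
    from borel_measurable_continuous_on_indicator[OF _ this] Uopen
    have "(\<lambda>z. indicator U z * (cmod (\<Phi>' z))\<^sup>2) \<in> borel_measurable borel" by simp
    then have "(\<lambda>z. ennreal (indicator U z * (cmod (\<Phi>' z))\<^sup>2)) \<in> borel_measurable borel" by simp
    then have "(\<lambda>z. indicator U z * ennreal ((cmod (\<Phi>' z))\<^sup>2)) \<in> borel_measurable borel"
      by (rule measurable_cong[THEN iffD1, rotated]) (auto simp: indicator_def)
    then show "(\<lambda>z. indicator U z * ennreal ((cmod (\<Phi>' z))\<^sup>2)) \<in> borel_measurable lborel"
      by simp
  qed
  also have "\<dots> \<le> ennreal (1 / L\<^sup>2) * ennreal (L * pi)"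
    using cov' by (rule mult_left_mono) simp
  also have "\<dots> = ennreal (pi / L)"
    using L by (simp add: ennreal_mult'[symmetric] power2_eq_square field_simps)
  finally have area: "(\<integral>\<^sup>+z. ennreal ((\<rho> z)\<^sup>2) \<partial>lborel) \<le> ennreal (pi / L)" .
  have "extremal_width (joining_paths X Y) \<le> (\<integral>\<^sup>+z. ennreal ((\<rho> z)\<^sup>2) \<partial>lborel)"
    unfolding extremal_width_def by (rule INF_lower) (use adm in simp)
  then show ?thesis using area L_def by simp
qed

lemma cot_diff:
  fixes a b :: real
  assumes "sin a \<noteq> 0" "sin b \<noteq> 0"
  shows "(- cos b / sin b) - (- cos a / sin a) = sin (b - a) / (sin a * sin b)"
  using assms by (simp add: field_simps sin_diff)

lemma cis_half:
  fixes h :: real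
  shows "\<i> * (1 + cis (2*h)) * complex_of_real (sin h) = - complex_of_real (cos h) * (1 - cis (2*h))"
proof -
  have c: "cis (2*h) = Complex ((cos h)\<^sup>2 - (sin h)\<^sup>2) (2 * sin h * cos h)"
    by (simp add: cis.code cos_double sin_double)
  have p: "(sin h)\<^sup>2 + (cos h)\<^sup>2 = 1" by simp
  have p': "cos h * cos h + sin h * sin h = 1" using p by (simp add: power2_eq_square)
  have e1: "cos h * (cos h * cos h) + cos h * (sin h * sin h) = cos h" using p' by algebra
  have e2: "cos h * (cos h * sin h) + sin h * (sin h * sin h) = sin h" using p' by algebra
  show ?thesis unfolding c
    using e1 e2 by (simp add: complex_eq_iff power2_eq_square algebra_simps)
qed

lemma Im_cayley:
  fixes a :: complex
  assumes "norm a < 1"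
  shows "0 < Im (\<i> * (1 + a) / (1 - a))"
proof -
  have ne: "1 - a \<noteq> 0" using assms by auto
  have num: "Im (\<i>*(1+a)) * Re (1-a) - Re (\<i>*(1+a)) * Im (1-a) = 1 - (Re a)\<^sup>2 - (Im a)\<^sup>2"
    by (simp add: algebra_simps power2_eq_square)
  have eq: "Im (\<i> * (1 + a) / (1 - a)) = (1 - (Re a)\<^sup>2 - (Im a)\<^sup>2) / (cmod (1 - a))\<^sup>2"
    by (simp only: Im_divide num cmod_power2)
  have "(Re a)\<^sup>2 + (Im a)\<^sup>2 < 1"
    using assms by (simp add: cmod_def)
  moreover have "0 < (cmod (1 - a))\<^sup>2" using ne by simp
  ultimately show ?thesis unfolding eq by (intro divide_pos_pos) auto
qed

lemma S_upper:
  fixes y :: complex and \<tau> :: real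
  assumes "0 < Im y" "0 < \<tau>" "\<tau> < 1"
  shows "1 + \<tau> * y \<noteq> 0 \<and> 0 < Im ((y + \<tau>) / (1 + \<tau> * y))"
proof
  have pos: "Im (1 + \<tau> * y) > 0" using assms by simp
  show ne: "1 + \<tau> * y \<noteq> 0"
  proof
    assume "1 + \<tau> * y = 0"
    then have "Im (1 + \<tau> * y) = 0" by simp
    then show False using pos by linarith
  qed
  have num: "Im (y + \<tau>) * Re (1 + \<tau> * y) - Re (y + \<tau>) * Im (1 + \<tau> * y) = Im y * (1 - \<tau>\<^sup>2)"
    by (simp add: algebra_simps power2_eq_square)
  have "Im ((y + \<tau>) / (1 + \<tau> * y)) = Im y * (1 - \<tau>\<^sup>2) / (cmod (1 + \<tau> * y))\<^sup>2"
    by (simp only: Im_divide num cmod_power2)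
  moreover have "0 < Im y * (1 - \<tau>\<^sup>2)"
  proof -
    have "\<tau> * \<tau> < 1 * \<tau>" by (rule mult_strict_right_mono) (use assms in auto)
    then have "\<tau> * \<tau> < 1" using assms by linarith
    then have "\<tau>\<^sup>2 < 1" by (simp add: power2_eq_square)
    then show ?thesis using assms by simp
  qed
  moreover have "0 < (cmod (1 + \<tau> * y))\<^sup>2" using ne by simp
  ultimately show "0 < Im ((y + \<tau>) / (1 + \<tau> * y))" by simp
qed

lemma S_real_in:
  fixes y \<tau> :: real
  assumes "-1 \<le> y" "y \<le> 1" "0 < \<tau>" "\<tau> < 1"
  shows "\<bar>y + \<tau>\<bar> \<le> \<bar>1 + \<tau> * y\<bar>"
proof -
  have "(y + \<tau>)\<^sup>2 \<le> (1 + \<tau> * y)\<^sup>2"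
  proof -
    have "(1 + \<tau> * y)\<^sup>2 - (y + \<tau>)\<^sup>2 = (1 - \<tau>\<^sup>2) * (1 - y\<^sup>2)"
      by (simp add: power2_eq_square algebra_simps)
    moreover have "0 \<le> (1 - \<tau>\<^sup>2) * (1 - y\<^sup>2)"
      using assms by (intro mult_nonneg_nonneg) (auto simp: power2_eq_square abs_le_iff mult_le_one
          intro: mult_le_one[of "\<bar>y\<bar>" "\<bar>y\<bar>", simplified] )
    ultimately show ?thesis by simp
  qed
  then show ?thesis by (simp add: abs_le_square_iff)
qed

lemma S_real_out:
  fixes y \<tau> :: real
  assumes "y \<le> - (\<tau> + 1/\<tau>) / 2" "0 < \<tau>" "\<tau> < 1"
  shows "(1/\<tau>) * \<bar>1 + \<tau> * y\<bar> \<le> \<bar>y + \<tau>\<bar>"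
proof -
  have "(1 + \<tau> * y)\<^sup>2 \<le> (\<tau> * (y + \<tau>))\<^sup>2"
  proof -
    have "(\<tau> * (y + \<tau>))\<^sup>2 - (1 + \<tau> * y)\<^sup>2 = (1 - \<tau>\<^sup>2) * (- (2 * \<tau> * y + \<tau>\<^sup>2 + 1))"
      by (simp add: power2_eq_square algebra_simps)
    moreover have "2 * \<tau> * y + \<tau>\<^sup>2 + 1 \<le> 0"
    proof -
      have "2 * \<tau> * y \<le> 2 * \<tau> * (- (\<tau> + 1/\<tau>) / 2)"
        using assms by (intro mult_left_mono) auto
      also have "\<dots> = - (\<tau>\<^sup>2 + 1)" using assms by (simp add: field_simps power2_eq_square)
      finally show ?thesis by simp
    qed
    moreover have "0 \<le> 1 - \<tau>\<^sup>2" using assms by (simp add: power2_eq_square mult_le_one)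
    ultimately have "0 \<le> (1 - \<tau>\<^sup>2) * (- (2 * \<tau> * y + \<tau>\<^sup>2 + 1))"
      by (intro mult_nonneg_nonneg) auto
    then show ?thesis using \<open>(\<tau> * (y + \<tau>))\<^sup>2 - (1 + \<tau> * y)\<^sup>2 = _\<close> by linarith
  qed
  then have "\<bar>1 + \<tau> * y\<bar> \<le> \<bar>\<tau> * (y + \<tau>)\<bar>" by (simp add: abs_le_square_iff)
  then have "\<bar>1 + \<tau> * y\<bar> \<le> \<tau> * \<bar>y + \<tau>\<bar>" using assms by (simp add: abs_mult)
  then show ?thesis using assms by (simp add: field_simps)
qed

lemma R_bound:
  fixes \<mu> :: real
  assumes "1 \<le> \<mu>"
  shows "pi / 2 \<le> ln (1 + 2*\<mu> + 2 * sqrt (\<mu>\<^sup>2 + \<mu>))"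
proof -
  have pi: "pi \<le> 3.1416" using pi_approx by simp
  have e4: "exp (pi/4) \<le> 1 + pi/4 + (pi/4)\<^sup>2"
    by (rule exp_bound) (use pi pi_gt3 in auto)
  have a: "pi/4 \<le> 7854/10000" using pi by simp
  have "(pi/4)\<^sup>2 \<le> (7854/10000)\<^sup>2" using a pi_gt_zero by (intro power_mono) auto
  then have b: "(pi/4)\<^sup>2 \<le> 61685316/100000000" by (simp add: power2_eq_square)
  have e4': "exp (pi/4) \<le> 24024/10000" using e4 a b by linarith
  have "exp (pi/2) = exp (pi/4) * exp (pi/4)" by (simp flip: exp_add)
  also have "\<dots> \<le> (24024/10000) * (24024/10000)" using e4' by (intro mult_mono) auto
  finally have e2: "exp (pi/2) \<le> 5772/1000" by simp
  have "sqrt 2 \<ge> 1414/1000" by (rule real_le_rsqrt) (simp add: power2_eq_square)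
  have "1*1 \<le> \<mu>*\<mu>" by (rule mult_mono) (use assms in auto)
  then have s: "sqrt (\<mu>\<^sup>2 + \<mu>) \<ge> sqrt 2" using assms by (intro real_sqrt_le_mono) (simp add: power2_eq_square)
  have "5772/1000 \<le> 1 + 2*\<mu> + 2 * sqrt (\<mu>\<^sup>2 + \<mu>)"
    using \<open>sqrt 2 \<ge> 1414/1000\<close> s assms by linarith
  then have "exp (pi/2) \<le> 1 + 2*\<mu> + 2 * sqrt (\<mu>\<^sup>2 + \<mu>)" using e2 by linarith
  then show ?thesis
    using assms by (subst ln_ge_iff) (auto intro: add_pos_nonneg)
qed

lemma sin_neg_range: "-pi < x \<Longrightarrow> x < 0 \<Longrightarrow> sin x < 0"
  using sin_gt_zero[of "-x"] by simp

lemma quad: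
  fixes t1 t2 t3 t4 :: real
  assumes o: "t1 < t2" "t2 < t3" "t3 < t4" "t4 < t1 + 2*pi"
  defines "\<mu> \<equiv> sin ((t2-t1)/2) * sin ((t4-t3)/2) / (sin ((t3-t2)/2) * sin ((t4-t1)/2))"
  shows "extremal_width (joining_paths (cis ` {t2..t3}) (cis ` {t4..t1+2*pi}))
           \<le> ennreal (pi / ln (1 + 2*\<mu> + 2 * sqrt (\<mu>\<^sup>2 + \<mu>)))"
proof -
  define h where "h s = (s - t4)/2" for s
  define c where "c s = - cos (h s) / sin (h s)" for s
  have sneg: "sin (h s) < 0" if "t1 \<le> s" "s \<le> t3" for s
    using that o by (intro sin_neg_range) (auto simp: h_def)
  have cd: "c b - c a = sin (h b - h a) / (sin (h a) * sin (h b))" if "sin (h a) \<noteq> 0" "sin (h b) \<noteq> 0" for a b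
    unfolding c_def by (rule cot_diff[OF that])
  have spos: "0 < sin x" if "0 < x" "x < pi" for x using sin_gt_zero that by auto
  have s1: "sin (h t1) < 0" and s2: "sin (h t2) < 0" and s3: "sin (h t3) < 0" using sneg o by auto
  have c21: "c t2 - c t1 = sin ((t2-t1)/2) / (sin (h t1) * sin (h t2))"
    using cd[of t1 t2] s1 s2 by (simp add: h_def diff_divide_distrib)
  have c32: "c t3 - c t2 = sin ((t3-t2)/2) / (sin (h t2) * sin (h t3))"
    using cd[of t2 t3] s2 s3 by (simp add: h_def diff_divide_distrib)
  have p21: "0 < sin ((t2-t1)/2)" using o by (intro spos) auto
  have p32: "0 < sin ((t3-t2)/2)" using o by (intro spos) auto
  have p43: "0 < sin ((t4-t3)/2)" using o by (intro spos) auto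
  have p41: "0 < sin ((t4-t1)/2)" using o by (intro spos) auto
  have pp12: "0 < sin (h t1) * sin (h t2)" using s1 s2 by (simp add: mult_neg_neg)
  have pp23: "0 < sin (h t2) * sin (h t3)" using s2 s3 by (simp add: mult_neg_neg)
  have gt21: "0 < c t2 - c t1" using c21 p21 pp12 by simp
  have gt32: "0 < c t3 - c t2" using c32 p32 pp23 by simp
  have h3: "sin (h t3) = - sin ((t4-t3)/2)"
    by (simp add: h_def) (metis minus_diff_eq sin_minus diff_divide_distrib)
  have h1: "sin (h t1) = - sin ((t4-t1)/2)"
    by (simp add: h_def) (metis minus_diff_eq sin_minus diff_divide_distrib)
  have mu_eq: "(c t2 - c t1) / (c t3 - c t2) = \<mu>"
    unfolding c21 c32 \<mu>_def using s1 s2 s3 p32 p41 h1 h3 by (simp add: field_simps)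
  have mu_pos: "0 < \<mu>" using mu_eq gt21 gt32 by (metis divide_pos_pos)
  define q where "q = sqrt (\<mu>\<^sup>2 + \<mu>)"
  have q0: "0 \<le> q" using mu_pos q_def by simp
  have qsq: "q * q = \<mu>\<^sup>2 + \<mu>" using mu_pos q_def by (simp add: power2_eq_square[symmetric])
  define R where "R = 1 + 2*\<mu> + 2*q"
  have R1: "1 < R" using mu_pos q0 R_def by simp
  define \<tau> where "\<tau> = 1 / R"
  have tau: "0 < \<tau>" "\<tau> < 1" using R1 \<tau>_def by auto
  have Rt: "R * \<tau> = 1" using R1 \<tau>_def by simp
  have invR: "1 / R = 1 + 2*\<mu> - 2*q"
  proof -
    have "R * (1 + 2*\<mu> - 2*q) = 1" unfolding R_def using qsq by (simp add: algebra_simps power2_eq_square)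
    then show ?thesis using R1 by (simp add: field_simps)
  qed
  have lam: "- (\<tau> + 1/\<tau>) / 2 = -1 - 2*\<mu>"
    using invR R1 by (simp add: \<tau>_def R_def field_simps)
  define \<alpha> where "\<alpha> = 2 / (c t3 - c t2)"
  define \<beta> where "\<beta> = - (c t2 + c t3) / (c t3 - c t2)"
  have al: "0 < \<alpha>" using gt32 \<alpha>_def by simp
  have fr2: "2/d * x + - (a + b)/d = (2*x - (a+b))/d" if "d \<noteq> 0" for d x a b :: real
    using that by (simp add: field_simps)
  have ne32: "c t3 - c t2 \<noteq> 0" using gt32 by simp
  have aff2: "\<alpha> * c t2 + \<beta> = -1"
  proof -
    have "\<alpha> * c t2 + \<beta> = (2 * c t2 - (c t2 + c t3)) / (c t3 - c t2)"
      unfolding \<alpha>_def \<beta>_def using fr2[OF ne32] by (simp add: mult.commute)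
    also have "2 * c t2 - (c t2 + c t3) = - (c t3 - c t2)" by simp
    finally show ?thesis using gt32 by (simp add: divide_eq_eq)
  qed
  have aff3: "\<alpha> * c t3 + \<beta> = 1"
  proof -
    have "\<alpha> * c t3 + \<beta> = (2 * c t3 - (c t2 + c t3)) / (c t3 - c t2)"
      unfolding \<alpha>_def \<beta>_def using fr2[OF ne32] by (simp add: mult.commute)
    also have "2 * c t3 - (c t2 + c t3) = (c t3 - c t2)" by simp
    also have "(c t3 - c t2) / (c t3 - c t2) = 1" using gt32 by (intro divide_self) simp
    finally show ?thesis .
  qed
  have aff1: "\<alpha> * c t1 + \<beta> = -1 - 2*\<mu>"
  proof -
    have fr: "(- d - 2*e)/d = -1 - 2*(e/d)" if "d \<noteq> 0" for d e :: real
      using that by (simp add: field_simps)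
    have "\<alpha> * c t1 + \<beta> = (2 * c t1 - (c t2 + c t3)) / (c t3 - c t2)"
      unfolding \<alpha>_def \<beta>_def using fr2[OF ne32] by (simp add: mult.commute)
    also have "2 * c t1 - (c t2 + c t3) = - (c t3 - c t2) - 2 * (c t2 - c t1)" by simp
    also have "(- (c t3 - c t2) - 2 * (c t2 - c t1)) / (c t3 - c t2) = -1 - 2 * ((c t2 - c t1) / (c t3 - c t2))"
      by (rule fr) (use gt32 in simp)
    finally show ?thesis using mu_eq by simp
  qed
  define \<epsilon> where "\<epsilon> = cis (- t4)"
  define n1 where "n1 = \<epsilon> * (\<i> * complex_of_real \<alpha> - complex_of_real (\<beta> + \<tau>))"
  define n0 where "n0 = \<i> * complex_of_real \<alpha> + complex_of_real (\<beta> + \<tau>)"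
  define d1 where "d1 = \<epsilon> * (\<i> * complex_of_real (\<tau> * \<alpha>) - complex_of_real (1 + \<tau> * \<beta>))"
  define d0 where "d0 = complex_of_real (1 + \<tau> * \<beta>) + \<i> * complex_of_real (\<tau> * \<alpha>)"
  have rep: "n1*z+n0 = (1 - \<epsilon>*z) * (complex_of_real \<alpha> * w + complex_of_real (\<beta> + \<tau>)) \<and>
             d1*z+d0 = (1 - \<epsilon>*z) * (1 + complex_of_real \<tau> * (complex_of_real \<alpha> * w + complex_of_real \<beta>))"
    if w: "w * (1 - \<epsilon>*z) = \<i> * (1 + \<epsilon>*z)" for z w
  proof -
    have "n1*z+n0 = complex_of_real \<alpha> * (\<i> * (1 + \<epsilon>*z)) + complex_of_real (\<beta> + \<tau>) * (1 - \<epsilon>*z)"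
      unfolding n1_def n0_def by (simp add: algebra_simps)
    also have "\<dots> = (1 - \<epsilon>*z) * (complex_of_real \<alpha> * w + complex_of_real (\<beta> + \<tau>))"
      unfolding w[symmetric] by (simp add: algebra_simps)
    finally have A: "n1*z+n0 = (1 - \<epsilon>*z) * (complex_of_real \<alpha> * w + complex_of_real (\<beta> + \<tau>))" .
    have "d1*z+d0 = complex_of_real (\<tau> * \<alpha>) * (\<i> * (1 + \<epsilon>*z)) + complex_of_real (1 + \<tau> * \<beta>) * (1 - \<epsilon>*z)"
      unfolding d1_def d0_def by (simp add: algebra_simps)
    also have "\<dots> = (1 - \<epsilon>*z) * (1 + complex_of_real \<tau> * (complex_of_real \<alpha> * w + complex_of_real \<beta>))"
      unfolding w[symmetric] by (simp add: algebra_simps)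
    finally show ?thesis using A by simp
  qed
  have det: "n1*d0 - n0*d1 \<noteq> 0"
  proof -
    have "n1*d0 - n0*d1 = 2 * \<i> * complex_of_real \<alpha> * (1 - complex_of_real \<tau> * complex_of_real \<tau>) * \<epsilon>"
      unfolding n1_def n0_def d1_def d0_def by (simp add: algebra_simps)
    moreover have "1 - complex_of_real \<tau> * complex_of_real \<tau> \<noteq> 0"
    proof
      assume "1 - complex_of_real \<tau> * complex_of_real \<tau> = 0"
      then have "\<tau> * \<tau> = 1" by (metis of_real_eq_1_iff of_real_mult right_minus_eq)
      moreover have "\<tau> * \<tau> < 1 * 1" using tau by (intro mult_strict_mono) auto
      ultimately show False by simp
    qed
    moreover have "\<epsilon> \<noteq> 0" unfolding \<epsilon>_def by simp
    ultimately show ?thesis using al by simp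
  qed
  have H: "d1*z+d0 \<noteq> 0 \<and> 0 < Im ((n1*z+n0) / (d1*z+d0))" if z: "norm z < 1" for z
  proof -
    define a where "a = \<epsilon> * z"
    have na: "norm a < 1" using z by (simp add: a_def \<epsilon>_def norm_mult)
    have ne: "1 - a \<noteq> 0" using na by auto
    define w where "w = \<i> * (1 + a) / (1 - a)"
    have ww: "w * (1 - \<epsilon>*z) = \<i> * (1 + \<epsilon>*z)" using ne by (simp add: w_def a_def)
    have imw: "0 < Im w" unfolding w_def by (rule Im_cayley[OF na])
    define y where "y = complex_of_real \<alpha> * w + complex_of_real \<beta>"
    have imy: "0 < Im y" using imw al by (simp add: y_def)
    have S: "1 + complex_of_real \<tau> * y \<noteq> 0 \<and> 0 < Im ((y + complex_of_real \<tau>) / (1 + complex_of_real \<tau> * y))"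
      by (rule S_upper[OF imy tau])
    have r: "n1*z+n0 = (1 - a) * (y + complex_of_real \<tau>)" "d1*z+d0 = (1 - a) * (1 + complex_of_real \<tau> * y)"
      using rep[OF ww] by (simp_all add: y_def a_def algebra_simps)
    show ?thesis using S ne unfolding r by simp
  qed
  have X: "norm (n1*z+n0) \<le> 1 * norm (d1*z+d0)" if zz: "z \<in> cis ` {t2..t3}" for z
  proof -
    obtain s where s: "s \<in> {t2..t3}" "z = cis s" using zz by auto
    have hs: "sin (h s) < 0" using s o by (intro sneg) auto
    define x where "x = c s"
    have e2h: "2 * h s = s - t4" by (simp add: h_def)
    have ez: "\<epsilon> * z = cis (2 * h s)" unfolding e2h using s by (simp add: \<epsilon>_def cis_mult)
    have ww: "complex_of_real x * (1 - \<epsilon>*z) = \<i> * (1 + \<epsilon>*z)"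
    proof -
      have "\<i> * (1 + cis (2 * h s)) * complex_of_real (sin (h s)) = - complex_of_real (cos (h s)) * (1 - cis (2 * h s))"
        by (rule cis_half)
      then show ?thesis unfolding ez x_def c_def using hs
        by (simp add: field_simps)
    qed
    have x2: "c t2 \<le> x"
    proof -
      have "x - c t2 = sin (h s - h t2) / (sin (h t2) * sin (h s))" unfolding x_def
        by (rule cd) (use hs s2 in auto)
      moreover have "0 \<le> sin (h s - h t2)" using s o by (intro sin_ge_zero) (auto simp: h_def field_simps)
      moreover have "0 < sin (h t2) * sin (h s)" using hs s2 by (simp add: mult_neg_neg)
      ultimately have "0 \<le> x - c t2" by (metis divide_nonneg_pos)
      then show ?thesis by simp
    qed
    have x3: "x \<le> c t3"
    proof -
      have "c t3 - x = sin (h t3 - h s) / (sin (h s) * sin (h t3))" unfolding x_def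
        by (rule cd) (use hs s3 in auto)
      moreover have "0 \<le> sin (h t3 - h s)" using s o by (intro sin_ge_zero) (auto simp: h_def field_simps)
      moreover have "0 < sin (h s) * sin (h t3)" using hs s3 by (simp add: mult_neg_neg)
      ultimately have "0 \<le> c t3 - x" by (metis divide_nonneg_pos)
      then show ?thesis by simp
    qed
    define y where "y = \<alpha> * x + \<beta>"
    have y: "-1 \<le> y" "y \<le> 1"
      using mult_left_mono[OF x2 less_imp_le[OF al]] mult_left_mono[OF x3 less_imp_le[OF al]] aff2 aff3
      by (auto simp: y_def)
    have r: "n1*z+n0 = (1 - \<epsilon>*z) * complex_of_real (y + \<tau>)"
            "d1*z+d0 = (1 - \<epsilon>*z) * complex_of_real (1 + \<tau> * y)"
      using rep[OF ww] by (simp_all add: y_def algebra_simps)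
    have "\<bar>y + \<tau>\<bar> \<le> \<bar>1 + \<tau> * y\<bar>" by (rule S_real_in[OF y tau])
    then show ?thesis unfolding r norm_mult norm_of_real mult_1_left by (rule mult_left_mono) simp
  qed
  have Y: "R * norm (d1*z+d0) \<le> norm (n1*z+n0)" if zz: "z \<in> cis ` {t4..t1+2*pi}" for z
  proof -
    obtain s where s: "s \<in> {t4..t1+2*pi}" "z = cis s" using zz by auto
    show ?thesis
    proof (cases "s = t4")
      case True
      then have ez: "\<epsilon> * z = 1" using s by (simp add: \<epsilon>_def cis_mult)
      have "n1*z+n0 = (\<i> * complex_of_real \<alpha> - complex_of_real (\<beta> + \<tau>)) * (\<epsilon>*z) + n0"
        unfolding n1_def by (simp add: algebra_simps)
      also have "\<dots> = 2 * \<i> * complex_of_real \<alpha>" unfolding ez n0_def by simp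
      finally have "n1*z+n0 = 2 * \<i> * complex_of_real \<alpha>" .
      moreover have "d1*z+d0 = 2 * \<i> * complex_of_real (\<tau> * \<alpha>)"
      proof -
        have "d1*z+d0 = (\<i> * complex_of_real (\<tau> * \<alpha>) - complex_of_real (1 + \<tau> * \<beta>)) * (\<epsilon>*z) + d0"
          unfolding d1_def by (simp add: algebra_simps)
        also have "\<dots> = 2 * \<i> * complex_of_real (\<tau> * \<alpha>)" unfolding ez d0_def by simp
        finally show ?thesis .
      qed
      ultimately show ?thesis using al tau Rt by (simp add: norm_mult)
    next
      case False
      then have sr: "t4 < s" "s \<le> t1 + 2*pi" using s by auto
      have hs: "0 < sin (h s)" using sr o by (intro spos) (auto simp: h_def)
      define x where "x = c s"
      have e2h: "2 * h s = s - t4" by (simp add: h_def)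
    have ez: "\<epsilon> * z = cis (2 * h s)" unfolding e2h using s by (simp add: \<epsilon>_def cis_mult)
      have ww: "complex_of_real x * (1 - \<epsilon>*z) = \<i> * (1 + \<epsilon>*z)"
      proof -
        have "\<i> * (1 + cis (2 * h s)) * complex_of_real (sin (h s)) = - complex_of_real (cos (h s)) * (1 - cis (2 * h s))"
          by (rule cis_half)
        then show ?thesis unfolding ez x_def c_def using hs
          by (simp add: field_simps)
      qed
      define g where "g = h t1 + pi"
      have g: "0 < g" "g < pi" using o by (auto simp: g_def h_def field_simps)
      have sg: "0 < sin g" using g by (intro spos)
      have c1g: "c t1 = - cos g / sin g" unfolding c_def g_def by simp
      have x1: "x \<le> c t1"
      proof -
        have "x - c t1 = sin (h s - g) / (sin g * sin (h s))"
          unfolding x_def c1g using cot_diff[of g "h s"] sg hs by (simp add: c_def)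
        moreover have "sin (h s - g) \<le> 0"
        proof -
          have "0 \<le> sin (g - h s)" using sr o by (intro sin_ge_zero) (auto simp: g_def h_def field_simps)
          then show ?thesis by (metis minus_diff_eq neg_0_le_iff_le sin_minus)
        qed
        moreover have "0 < sin g * sin (h s)" using sg hs by simp
        ultimately have "x - c t1 \<le> 0" by (metis divide_nonpos_pos)
        then show ?thesis by simp
      qed
      define y where "y = \<alpha> * x + \<beta>"
      have y: "y \<le> - (\<tau> + 1/\<tau>) / 2"
        using mult_left_mono[OF x1 less_imp_le[OF al]] aff1 lam by (simp add: y_def)
      have r: "n1*z+n0 = (1 - \<epsilon>*z) * complex_of_real (y + \<tau>)"
              "d1*z+d0 = (1 - \<epsilon>*z) * complex_of_real (1 + \<tau> * y)"
        using rep[OF ww] by (simp_all add: y_def algebra_simps)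
      have "(1/\<tau>) * \<bar>1 + \<tau> * y\<bar> \<le> \<bar>y + \<tau>\<bar>" by (rule S_real_out[OF y tau])
      then have "R * \<bar>1 + \<tau> * y\<bar> \<le> \<bar>y + \<tau>\<bar>" using \<tau>_def R1 by simp
      then have "norm (1 - \<epsilon>*z) * (R * \<bar>1 + \<tau> * y\<bar>) \<le> norm (1 - \<epsilon>*z) * \<bar>y + \<tau>\<bar>"
        by (rule mult_left_mono) simp
      then show ?thesis unfolding r norm_mult norm_of_real by (metis mult.left_commute)
    qed
  qed
  have "extremal_width (joining_paths (cis ` {t2..t3}) (cis ` {t4..t1+2*pi})) \<le> ennreal (pi / ln (R / 1))"
    by (rule core_bound[OF det H _ R1 X Y]) auto
  then show ?thesis by (simp add: R_def q_def)
qed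

lemma ew_mono:
  assumes "X \<subseteq> X'" "Y \<subseteq> Y'"
  shows "extremal_width (joining_paths X Y) \<le> extremal_width (joining_paths X' Y')"
proof -
  have sub: "joining_paths X Y \<subseteq> joining_paths X' Y'"
    using assms unfolding joining_paths_def by auto
  have "{\<rho>. admissible_metric (joining_paths X' Y') \<rho>} \<subseteq> {\<rho>. admissible_metric (joining_paths X Y) \<rho>}"
    using sub unfolding admissible_metric_def by auto
  then show ?thesis unfolding extremal_width_def by (rule INF_superset_mono) simp
qed

lemma theta_less:
  assumes "ideal_marking p \<theta>" "i < j" "j \<le> p"
  shows "\<theta> i < \<theta> j"
  using assms(2,3)
proof (induction j)
  case 0 then show ?case by simp
next
  case (Suc j)
  have step: "\<theta> j < \<theta> (Suc j)" using assms(1) Suc.prems unfolding ideal_marking_def by auto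
  show ?case
  proof (cases "i = j")
    case True then show ?thesis using step by simp
  next
    case False then have "i < j" using Suc.prems by simp
    then have "\<theta> i < \<theta> j" using Suc.IH Suc.prems by simp
    then show ?thesis using step by simp
  qed
qed

lemma theta_le:
  assumes "ideal_marking p \<theta>" "i \<le> j" "j \<le> p"
  shows "\<theta> i \<le> \<theta> j"
  using theta_less[OF assms(1)] assms(2,3) by (cases "i = j") (auto intro: less_imp_le)

lemma W_le_2:
  fixes \<mu> :: real
  assumes "1 \<le> \<mu>"
  shows "ennreal (pi / ln (1 + 2*\<mu> + 2 * sqrt (\<mu>\<^sup>2 + \<mu>))) \<le> 2"
proof -
  have l: "pi / 2 \<le> ln (1 + 2*\<mu> + 2 * sqrt (\<mu>\<^sup>2 + \<mu>))" by (rule R_bound[OF assms])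
  define L where "L = ln (1 + 2*\<mu> + 2 * sqrt (\<mu>\<^sup>2 + \<mu>))"
  have Lpos: "0 < L" using l pi_gt_zero L_def by linarith
  have "pi \<le> 2 * L" using l L_def by simp
  then have "pi / L \<le> 2" using Lpos by (simp add: divide_le_eq)
  then have "pi / ln (1 + 2*\<mu> + 2 * sqrt (\<mu>\<^sup>2 + \<mu>)) \<le> 2" using L_def by simp
  then show ?thesis by (metis ennreal_leI ennreal_numeral)
qed

lemma crossing_not_both_wide:
  assumes im: "ideal_marking p \<theta>" and idx: "m < k" "k < n" "n < l" "l < p"
  shows "\<not> (extremal_width (joining_paths (marking_arc \<theta> m) (marking_arc \<theta> n)) > 2 \<and>
            extremal_width (joining_paths (marking_arc \<theta> k) (marking_arc \<theta> l)) > 2)"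
proof -
  define t1 where "t1 = \<theta> m"
  define t2 where "t2 = \<theta> (Suc m)"
  define t3 where "t3 = \<theta> n"
  define t4 where "t4 = \<theta> (Suc n)"
  have tp: "\<theta> p = \<theta> 0 + 2*pi" using im unfolding ideal_marking_def by simp
  have th0m: "\<theta> 0 \<le> \<theta> m" using theta_le[OF im, of 0 m] idx by simp
  have o1: "t1 < t2" unfolding t1_def t2_def using theta_less[OF im, of m "Suc m"] idx by simp
  have o2: "t2 < t3" unfolding t2_def t3_def using theta_less[OF im, of "Suc m" n] idx by simp
  have o3: "t3 < t4" unfolding t3_def t4_def using theta_less[OF im, of n "Suc n"] idx by simp
  have o4: "t4 < t1 + 2*pi" unfolding t4_def t1_def using theta_less[OF im, of "Suc n" p] idx tp th0m by simp
  define \<mu> where "\<mu> = sin ((t2-t1)/2) * sin ((t4-t3)/2) / (sin ((t3-t2)/2) * sin ((t4-t1)/2))"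
  define \<mu>' where "\<mu>' = sin ((t1-(t4-2*pi))/2) * sin ((t3-t2)/2) / (sin ((t2-t1)/2) * sin ((t3-(t4-2*pi))/2))"
  have Q1: "extremal_width (joining_paths (cis ` {t2..t3}) (cis ` {t4..t1+2*pi}))
           \<le> ennreal (pi / ln (1 + 2*\<mu> + 2 * sqrt (\<mu>\<^sup>2 + \<mu>)))"
    unfolding \<mu>_def by (rule quad[OF o1 o2 o3 o4])
  have Q2: "extremal_width (joining_paths (cis ` {t1..t2}) (cis ` {t3..(t4-2*pi)+2*pi}))
           \<le> ennreal (pi / ln (1 + 2*\<mu>' + 2 * sqrt (\<mu>'\<^sup>2 + \<mu>')))"
    unfolding \<mu>'_def by (rule quad) (use o1 o2 o3 o4 in auto)
  have spos: "0 < sin x" if "0 < x" "x < pi" for x using sin_gt_zero that by auto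
  have p21: "0 < sin ((t2-t1)/2)" using o1 o2 o3 o4 by (intro spos) auto
  have p32: "0 < sin ((t3-t2)/2)" using o1 o2 o3 o4 by (intro spos) auto
  have p43: "0 < sin ((t4-t3)/2)" using o1 o2 o3 o4 by (intro spos) auto
  have p41: "0 < sin ((t4-t1)/2)" using o1 o2 o3 o4 by (intro spos) auto
  have e1: "sin ((t1-(t4-2*pi))/2) = sin ((t4-t1)/2)"
  proof -
    have eq: "(t1-(t4-2*pi))/2 = - ((t4-t1)/2) + pi" by (simp add: field_simps)
    have "sin (- ((t4-t1)/2) + pi) = sin ((t4-t1)/2)" by (simp add: sin_add)
    then show ?thesis using arg_cong[where f=sin, OF eq] by simp
  qed
  have e2: "sin ((t3-(t4-2*pi))/2) = sin ((t4-t3)/2)"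
  proof -
    have eq: "(t3-(t4-2*pi))/2 = - ((t4-t3)/2) + pi" by (simp add: field_simps)
    have "sin (- ((t4-t3)/2) + pi) = sin ((t4-t3)/2)" by (simp add: sin_add)
    then show ?thesis using arg_cong[where f=sin, OF eq] by simp
  qed
  have mupos: "0 < \<mu>" unfolding \<mu>_def using p21 p32 p43 p41 by simp
  have mu': "\<mu>' = 1 / \<mu>" unfolding \<mu>'_def \<mu>_def e1 e2 by simp
  have arcs_k: "marking_arc \<theta> k \<subseteq> cis ` {t2..t3}"
    unfolding marking_arc_def t2_def t3_def
    using theta_le[OF im, of "Suc m" k] theta_le[OF im, of "Suc k" n] idx
    by (intro image_mono) auto
  have arcs_l: "marking_arc \<theta> l \<subseteq> cis ` {t4..t1+2*pi}"
    unfolding marking_arc_def t4_def t1_def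
    using theta_le[OF im, of "Suc n" l] theta_le[OF im, of "Suc l" p] idx tp th0m
    by (intro image_mono) auto
  have arcs_m: "marking_arc \<theta> m = cis ` {t1..t2}" unfolding marking_arc_def t1_def t2_def ..
  have arcs_n: "marking_arc \<theta> n = cis ` {t3..(t4-2*pi)+2*pi}" unfolding marking_arc_def t3_def t4_def by simp
  show ?thesis
  proof (cases "1 \<le> \<mu>")
    case True
    have "extremal_width (joining_paths (marking_arc \<theta> k) (marking_arc \<theta> l))
        \<le> extremal_width (joining_paths (cis ` {t2..t3}) (cis ` {t4..t1+2*pi}))"
      by (rule ew_mono[OF arcs_k arcs_l])
    also have "\<dots> \<le> 2" using Q1 W_le_2[OF True] by (rule order_trans)
    finally show ?thesis by (simp add: not_less)
  next
    case False
    then have "1 \<le> 1 / \<mu>" using mupos by (simp add: le_divide_eq)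
    then have "1 \<le> \<mu>'" using mu' by simp
    have "extremal_width (joining_paths (marking_arc \<theta> m) (marking_arc \<theta> n)) \<le> 2"
      unfolding arcs_m arcs_n using Q2 W_le_2[OF \<open>1 \<le> \<mu>'\<close>] by (rule order_trans)
    then show ?thesis by (simp add: not_less)
  qed
qed

lemma laminar_good_exists:
  fixes F :: "(nat \<times> nat) set"
  assumes len: "\<forall>(a,b)\<in>F. a + 2 \<le> b"
    and lam: "\<forall>(a,b)\<in>F. \<forall>(c,d)\<in>F. \<not>(a<c \<and> c<b \<and> b<d)"
    and I: "(a,b) \<in> F"
  shows "\<exists>c. a<c \<and> c<b \<and> \<not>(\<exists>(a',b')\<in>F. (a',b') \<noteq> (a,b) \<and> a \<le> a' \<and> b' \<le> b \<and> a'<c \<and> c<b')"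
proof (rule ccontr)
  assume nex: "\<not> ?thesis"
  have ab: "a + 2 \<le> b" using len I by auto
  define S where "S = {b1. (a,b1)\<in>F \<and> b1 < b}"
  have "\<exists>(a',b')\<in>F. (a',b') \<noteq> (a,b) \<and> a \<le> a' \<and> b' \<le> b \<and> a'<a+1 \<and> a+1<b'"
    using nex ab by auto
  then obtain a' b' where h: "(a',b')\<in>F" "(a',b') \<noteq> (a,b)" "a \<le> a'" "b' \<le> b" "a'<a+1" "a+1<b'"
    by blast
  then have "a' = a" by simp
  with h have b': "(a,b')\<in>F" "b' < b" "a+1 < b'" by auto
  have Sne: "S \<noteq> {}" using b' S_def by auto
  have Sfin: "finite S" unfolding S_def by (rule finite_subset[of _ "{..<b}"]) auto
  define b1 where "b1 = Max S"
  have b1S: "b1 \<in> S" using Sne Sfin b1_def by auto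
  have b1max: "\<And>x. x \<in> S \<Longrightarrow> x \<le> b1" using Sfin b1_def by auto
  have b1F: "(a,b1)\<in>F" "b1 < b" using b1S S_def by auto
  have "a + 2 \<le> b1" using len b1F by auto
  then obtain a2 b2 where c2: "(a2,b2)\<in>F" "(a2,b2) \<noteq> (a,b)" "a \<le> a2" "b2 \<le> b" "a2 < b1" "b1 < b2"
    using nex b1F by fastforce
  show False
  proof (cases "a2 = a")
    case True
    then have "b2 \<in> S" using c2 S_def by auto
    then show False using b1max c2 by fastforce
  next
    case False
    then have "a < a2" using c2 by auto
    then show False using lam b1F c2 by fastforce
  qed
qed

lemma laminar_count:
  fixes F :: "(nat \<times> nat) set"
  assumes len: "\<forall>(a,b)\<in>F. a + 2 \<le> b \<and> b \<le> N"
    and lam: "\<forall>(a,b)\<in>F. \<forall>(c,d)\<in>F. \<not>(a<c \<and> c<b \<and> b<d)"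
  shows "card F \<le> N - 1"
proof -
  define good where "good I c \<longleftrightarrow> fst I < c \<and> c < snd I \<and>
     \<not>(\<exists>(a',b')\<in>F. (a',b') \<noteq> I \<and> fst I \<le> a' \<and> b' \<le> snd I \<and> a'<c \<and> c<b')" for I c
  have ex: "\<exists>c. good I c" if "I \<in> F" for I
  proof -
    obtain a b where I: "I = (a,b)" by force
    have len': "\<forall>(a,b)\<in>F. a + 2 \<le> b" using len by auto
    show ?thesis using laminar_good_exists[OF len' lam, of a b] that I good_def by auto
  qed
  define f where "f I = (SOME c. good I c)" for I
  have fg: "good I (f I)" if "I \<in> F" for I
    using ex[OF that] f_def by (metis someI_ex)
  have inj: "inj_on f F"
  proof (rule inj_onI)
    fix I J assume IJ: "I \<in> F" "J \<in> F" "f I = f J"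
    obtain a b where I: "I = (a,b)" by force
    obtain a' b' where J: "J = (a',b')" by force
    define c where "c = f I"
    have gI: "good (a,b) c" using fg[OF IJ(1)] I c_def by simp
    have gJ: "good (a',b') c" using fg[OF IJ(2)] J c_def IJ(3) by simp
    show "I = J"
    proof (rule ccontr)
      assume ne: "I \<noteq> J"
      have l1: "\<not>(a<a' \<and> a'<b \<and> b<b')" using lam IJ I J by fastforce
      have l2: "\<not>(a'<a \<and> a<b' \<and> b'<b)" using lam IJ I J by fastforce
      have o: "a < c" "c < b" "a' < c" "c < b'" using gI gJ good_def by auto
      have n1: "\<not>(a \<le> a' \<and> b' \<le> b)" using gI IJ(2) J I ne o unfolding good_def by fastforce
      have n2: "\<not>(a' \<le> a \<and> b \<le> b')" using gJ IJ(1) J I ne o unfolding good_def by fastforce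
      show False using l1 l2 n1 n2 o by linarith
    qed
  qed
  have sub: "f ` F \<subseteq> {1..<N}"
  proof
    fix x assume "x \<in> f ` F"
    then obtain I where "I \<in> F" "x = f I" by auto
    then show "x \<in> {1..<N}" using fg[of I] len good_def by fastforce
  qed
  have "card F = card (f ` F)" using inj by (simp add: card_image)
  also have "\<dots> \<le> card {1..<N}" using sub by (intro card_mono) auto
  finally show ?thesis by simp
qed

theorem corollary3p4:
  fixes p :: nat and \<theta> :: "nat \<Rightarrow> real"
  assumes "ideal_marking p \<theta>"
  shows "card {(m, n). m < n \<and> n < p \<and> \<not> adjacent_mod p m n \<and>
            extremal_width (joining_paths (marking_arc \<theta> m) (marking_arc \<theta> n)) > 2} \<le> p - 2"
proof -
  let ?F = "{(m, n). m < n \<and> n < p \<and> \<not> adjacent_mod p m n \<and>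
            extremal_width (joining_paths (marking_arc \<theta> m) (marking_arc \<theta> n)) > 2}"
  have len: "\<forall>(a,b)\<in>?F. a + 2 \<le> b \<and> b \<le> p - 1"
  proof safe
    fix a b assume h: "a < b" "b < p" "\<not> adjacent_mod p a b"
    have "Suc a mod p = Suc a" using h by simp
    then have "b \<noteq> Suc a" using h unfolding adjacent_mod_def by auto
    then show "a + 2 \<le> b" using h by simp
    show "b \<le> p - 1" using h by simp
  qed
  have lam: "\<forall>(a,b)\<in>?F. \<forall>(c,d)\<in>?F. \<not>(a<c \<and> c<b \<and> b<d)"
    using crossing_not_both_wide[OF assms] by fastforce
  have "card ?F \<le> p - 1 - 1" by (rule laminar_count[OF len lam])
  then show ?thesis by simp
qed


end
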